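(* Let $\lambda>0$, let $E_1,E_2,\ldots$ be i.i.d. $\text{Exp}(\lambda)$ random variables, and let $$X=\prod_{i=1}^{\infty}\min\left\{\sum_{k=1}^iE_k,1\right\}.$$ Then, as $t\to 0^+$, $$\log\mathbb{P}(X\le t)=-\left(\sqrt{-\log t}-\sqrt{\lambda}\right)^2+O\left(\log(-\log t)\right).$$
   Context: $\text{Exp}(\lambda)$ denotes the exponential distribution with rate $\lambda$ (mean $1/\lambda$). The $O(\cdot)$ term may depend on $\lambda$. *)

theory Defs
  imports "HOL-Probability.Probability" "HOL-Library.Landau_Symbols"
begin

text \<open>Indices are 0-based: factor i uses S_i = E_0 + ... + E_i.\<close>
definition prod_min_partial_sums :: "(nat \<Rightarrow> 'a \<Rightarrow> real) \<Rightarrow> 'a \<Rightarrow> real" where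
  "prod_min_partial_sums E \<omega> = lim (\<lambda>n. \<Prod>i<n. min (\<Sum>k\<le>i. E k \<omega>) 1)"

end

theory Submission
  imports Defs
begin

definition U01 :: "real measure" where "U01 = density lborel (indicator {0..1})"

lemma sets_U01[measurable_cong, simp]: "sets U01 = sets borel" by (simp add: U01_def)
lemma space_U01[simp]: "space U01 = UNIV" by (simp add: U01_def)

lemma prob_space_U01: "prob_space U01"
  unfolding U01_def by (rule prob_spaceI) (simp add: emeasure_density)

primrec nu :: "nat \<Rightarrow> real measure" where
  "nu 0 = return borel 1"
| "nu (Suc m) = distr (nu m \<Otimes>\<^sub>M U01) borel (\<lambda>(v,u). v * u)"

lemma sets_nu[measurable_cong, simp]: "sets (nu m) = sets borel"
  by (cases m) auto

lemma space_nu[simp]: "space (nu m) = UNIV"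
  using sets_eq_imp_space_eq[OF sets_nu[of m]] by simp

lemma prob_space_nu: "prob_space (nu m)"
proof (induction m)
  case 0 then show ?case by (simp add: prob_space_return)
next
  case (Suc m)
  interpret A: prob_space "nu m" by fact
  interpret B: prob_space U01 by (rule prob_space_U01)
  interpret P: pair_prob_space "nu m" U01 ..
  show ?case by simp (rule P.prob_space_distr, measurable)
qed

lemma nn_integral_nu_Suc:
  assumes [measurable]: "f \<in> borel_measurable borel"
  shows "(\<integral>\<^sup>+w. f w \<partial>nu (Suc m)) = (\<integral>\<^sup>+v. \<integral>\<^sup>+u. indicator {0..1} u * f (v * u) \<partial>lborel \<partial>nu m)"
proof -
  interpret A: prob_space "nu m" by (rule prob_space_nu)
  interpret B: prob_space U01 by (rule prob_space_U01)
  interpret P: pair_prob_space "nu m" U01 ..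
  have "(\<integral>\<^sup>+w. f w \<partial>nu (Suc m)) = (\<integral>\<^sup>+p. f (fst p * snd p) \<partial>(nu m \<Otimes>\<^sub>M U01))"
    by (simp add: nn_integral_distr case_prod_beta)
  also have "\<dots> = (\<integral>\<^sup>+v. \<integral>\<^sup>+u. f (v * u) \<partial>U01 \<partial>nu m)"
    by (subst B.nn_integral_fst[symmetric]) (auto)
  also have "\<dots> = (\<integral>\<^sup>+v. \<integral>\<^sup>+u. indicator {0..1} u * f (v * u) \<partial>lborel \<partial>nu m)"
    unfolding U01_def by (subst nn_integral_density) auto
  finally show ?thesis .
qed


lemma nn_integral_nu_Suc':
  assumes [measurable]: "f \<in> borel_measurable borel"
  shows "(\<integral>\<^sup>+w. f w \<partial>nu (Suc m)) = (\<integral>\<^sup>+u. indicator {0..1} u * (\<integral>\<^sup>+v. f (v * u) \<partial>nu m) \<partial>lborel)"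
proof -
  interpret A: prob_space "nu m" by (rule prob_space_nu)
  interpret P: pair_sigma_finite "nu m" lborel ..
  have "(\<integral>\<^sup>+w. f w \<partial>nu (Suc m)) = (\<integral>\<^sup>+v. \<integral>\<^sup>+u. indicator {0..1} u * f (v * u) \<partial>lborel \<partial>nu m)"
    by (rule nn_integral_nu_Suc) fact
  also have "\<dots> = (\<integral>\<^sup>+u. \<integral>\<^sup>+v. indicator {0..1} u * f (v * u) \<partial>nu m \<partial>lborel)"
    by (rule P.Fubini'[symmetric]) measurable
  also have "\<dots> = (\<integral>\<^sup>+u. indicator {0..1} u * (\<integral>\<^sup>+v. f (v * u) \<partial>nu m) \<partial>lborel)"
    by (subst nn_integral_cmult) auto
  finally show ?thesis .
qed

lemma nn_integral_powr_01:
  assumes "0 \<le> s" "s < 1"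
  shows "(\<integral>\<^sup>+u. indicator {0..1} u * ennreal (u powr (-s)) \<partial>lborel) = ennreal (1 / (1 - s))"
proof -
  have "((\<lambda>x. x powr (-s)) has_integral (1 powr (-s+1) / (-s+1))) {0..1}"
    by (rule has_integral_powr_from_0) (use assms in auto)
  then have "integral\<^sup>N lborel (\<lambda>x. indicator {0..1} x * (x powr (-s))) = 1 / (1 - s)"
    by (subst nn_integral_has_integral_lebesgue) auto
  moreover have "(\<integral>\<^sup>+u. indicator {0..1} u * ennreal (u powr (-s)) \<partial>lborel)
     = integral\<^sup>N lborel (\<lambda>x. indicator {0..1} x * (x powr (-s)))"
    by (rule nn_integral_cong) (auto simp: indicator_def)
  ultimately show ?thesis by simp
qed

lemma nu_upper:
  assumes s: "0 < s" "s < 1" and "0 < \<tau>"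
  shows "emeasure (nu m) {..\<tau>} \<le> ennreal (\<tau> powr s / (1 - s) ^ m)"
  using assms(3)
proof (induction m arbitrary: \<tau>)
  case 0
  then show ?case
  proof (cases "1 \<le> \<tau>")
    case True
    then have "1 \<le> \<tau> powr s" using s by (simp add: ge_one_powr_ge_zero)
    then show ?thesis using True by (simp add: emeasure_return)
  next
    case False
    then show ?thesis by (simp add: emeasure_return indicator_def)
  qed
next
  case (Suc m)
  have "emeasure (nu (Suc m)) {..\<tau>} = (\<integral>\<^sup>+w. indicator {..\<tau>} w \<partial>nu (Suc m))"
    by (simp add: nn_integral_indicator[symmetric] del: nn_integral_indicator)
  also have "\<dots> = (\<integral>\<^sup>+u. indicator {0..1} u * (\<integral>\<^sup>+v. indicator {..\<tau>} (v * u) \<partial>nu m) \<partial>lborel)"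
    by (rule nn_integral_nu_Suc') measurable
  also have "\<dots> \<le> (\<integral>\<^sup>+u. indicator {0..1} u * ennreal (u powr (-s)) * ennreal (\<tau> powr s / (1 - s) ^ m) \<partial>lborel)"
  proof (rule nn_integral_mono_AE)
    show "AE u in lborel. indicator {0..1} u * (\<integral>\<^sup>+v. indicator {..\<tau>} (v * u) \<partial>nu m)
       \<le> indicator {0..1} u * ennreal (u powr (-s)) * ennreal (\<tau> powr s / (1 - s) ^ m)"
      using AE_lborel_singleton[of 0]
    proof eventually_elim
      case (elim u)
      show ?case
      proof (cases "u \<in> {0..1}")
        case True
        with elim have u: "0 < u" "u \<le> 1" by auto
        have "(\<integral>\<^sup>+v. indicator {..\<tau>} (v * u) \<partial>nu m) = (\<integral>\<^sup>+v. indicator {..\<tau>/u} v \<partial>nu m)"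
          by (rule nn_integral_cong) (use u in \<open>auto simp: indicator_def pos_le_divide_eq\<close>)
        also have "\<dots> = emeasure (nu m) {..\<tau>/u}" by simp
        also have "\<dots> \<le> ennreal ((\<tau>/u) powr s / (1 - s) ^ m)"
          using Suc.IH[of "\<tau>/u"] Suc.prems u by auto
        also have "(\<tau>/u) powr s / (1 - s) ^ m = u powr (-s) * (\<tau> powr s / (1 - s) ^ m)"
          using u Suc.prems by (simp add: powr_divide powr_minus divide_simps)
        finally have "(\<integral>\<^sup>+v. indicator {..\<tau>} (v * u) \<partial>nu m) \<le> ennreal (u powr (-s) * (\<tau> powr s / (1 - s) ^ m))" .
        also have "\<dots> = ennreal (u powr (-s)) * ennreal (\<tau> powr s / (1 - s) ^ m)"
          using s by (intro ennreal_mult) auto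
        finally show ?thesis using True by (simp add: mult.assoc)
      qed simp
    qed
  qed
  also have "\<dots> = (\<integral>\<^sup>+u. indicator {0..1} u * ennreal (u powr (-s)) \<partial>lborel) * ennreal (\<tau> powr s / (1 - s) ^ m)"
    by (rule nn_integral_multc) measurable
  also have "\<dots> = ennreal (1 / (1 - s)) * ennreal (\<tau> powr s / (1 - s) ^ m)"
    using s by (simp add: nn_integral_powr_01)
  also have "\<dots> = ennreal (\<tau> powr s / (1 - s) ^ Suc m)"
    using s by (simp add: ennreal_mult'[symmetric] field_simps)
  finally show ?case .
qed


lemma nu_lower:
  assumes "0 < \<tau>" "\<tau> \<le> 1"
  shows "ennreal (\<tau> * (- ln \<tau>) ^ m / fact m) \<le> emeasure (nu (Suc m)) {..\<tau>}"
  using assms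
proof (induction m arbitrary: \<tau>)
  case 0
  have "emeasure (nu (Suc 0)) {..\<tau>} = (\<integral>\<^sup>+w. indicator {..\<tau>} w \<partial>nu (Suc 0))"
    by (simp add: nn_integral_indicator[symmetric] del: nn_integral_indicator)
  also have "\<dots> = (\<integral>\<^sup>+u. indicator {0..1} u * (\<integral>\<^sup>+v. indicator {..\<tau>} (v * u) \<partial>nu 0) \<partial>lborel)"
    by (rule nn_integral_nu_Suc') measurable
  also have "\<dots> = (\<integral>\<^sup>+u. indicator {0..\<tau>} u \<partial>lborel)"
    using 0 by (intro nn_integral_cong) (auto simp: nn_integral_return indicator_def)
  also have "\<dots> = ennreal \<tau>" using 0 by simp
  finally show ?case by simp
next
  case (Suc m)
  define F where "F u = \<tau> * (ln (u / \<tau>)) ^ Suc m / fact (Suc m)" for u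
  define f where "f u = \<tau> / u * (ln (u / \<tau>)) ^ m / fact m" for u
  have "ennreal (\<tau> * (- ln \<tau>) ^ Suc m / fact (Suc m)) = ennreal (F 1 - F \<tau>)"
    by (simp add: F_def ln_div Suc.prems)
  also have "\<dots> = (\<integral>\<^sup>+u. ennreal (f u) * indicator {\<tau>..1} u \<partial>lborel)"
  proof (rule nn_integral_FTC_Icc[symmetric])
    show "f \<in> borel_measurable borel" unfolding f_def by measurable
    show "\<tau> \<le> 1" by fact
    fix x assume x: "x \<in> {\<tau>..1}"
    then have xp: "0 < x" using Suc.prems by auto
    show "0 \<le> f x" using x xp Suc.prems by (auto simp: f_def)
    show "(F has_real_derivative f x) (at x)"
      unfolding F_def f_def
      apply (rule derivative_eq_intros refl | use xp Suc.prems in simp)+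
      done
  qed
  also have "\<dots> \<le> (\<integral>\<^sup>+u. indicator {0..1} u * (\<integral>\<^sup>+v. indicator {..\<tau>} (v * u) \<partial>nu (Suc m)) \<partial>lborel)"
  proof (rule nn_integral_mono)
    fix u
    show "ennreal (f u) * indicator {\<tau>..1} u \<le> indicator {0..1} u * (\<integral>\<^sup>+v. indicator {..\<tau>} (v * u) \<partial>nu (Suc m))"
    proof (cases "u \<in> {\<tau>..1}")
      case True
      then have u: "0 < u" "\<tau> \<le> u" "u \<le> 1" using Suc.prems by auto
      have "(\<integral>\<^sup>+v. indicator {..\<tau>} (v * u) \<partial>nu (Suc m)) = (\<integral>\<^sup>+v. indicator {..\<tau>/u} v \<partial>nu (Suc m))"
        by (rule nn_integral_cong) (use u in \<open>auto simp: indicator_def pos_le_divide_eq\<close>)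
      also have "\<dots> = emeasure (nu (Suc m)) {..\<tau>/u}" by simp
      finally have eq: "(\<integral>\<^sup>+v. indicator {..\<tau>} (v * u) \<partial>nu (Suc m)) = emeasure (nu (Suc m)) {..\<tau>/u}" .
      have "ennreal (f u) = ennreal (\<tau>/u * (- ln (\<tau>/u)) ^ m / fact m)"
        using u Suc.prems by (simp add: f_def ln_div)
      also have "\<dots> \<le> emeasure (nu (Suc m)) {..\<tau>/u}"
        using u Suc.prems by (intro Suc.IH) (auto simp: divide_le_eq_1)
      finally show ?thesis using True u eq by simp
    qed simp
  qed
  also have "\<dots> = (\<integral>\<^sup>+w. indicator {..\<tau>} w \<partial>nu (Suc (Suc m)))"
    by (rule nn_integral_nu_Suc'[symmetric]) measurable
  also have "\<dots> = emeasure (nu (Suc (Suc m))) {..\<tau>}"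
    by simp
  finally show ?case .
qed


lemma step2d_inner:
  fixes k :: "real \<Rightarrow> ennreal"
  assumes l: "0 < l" and k[measurable]: "k \<in> borel_measurable borel"
  shows "(\<integral>\<^sup>+g. ennreal (erlang_density m l g) * ennreal (exponential_density l (G - g)) * k ((g/G)^(Suc m)) \<partial>lborel)
       = ennreal (erlang_density (Suc m) l G) * (\<integral>\<^sup>+u. indicator {0..1} u * k u \<partial>lborel)"
proof (cases "0 < G")
  case False
  have "AE g in lborel. ennreal (erlang_density m l g) * ennreal (exponential_density l (G - g)) * k ((g/G)^(Suc m)) = 0"
    using AE_lborel_singleton[of 0]
  proof eventually_elim
    case (elim g)
    then show ?case using False by (cases "g < 0") (auto simp: erlang_density_def)
  qed
  then have "(\<integral>\<^sup>+g. ennreal (erlang_density m l g) * ennreal (exponential_density l (G - g)) * k ((g/G)^(Suc m)) \<partial>lborel)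
      = (\<integral>\<^sup>+g. 0 \<partial>(lborel::real measure))"
    by (rule nn_integral_cong_AE)
  moreover have "erlang_density (Suc m) l G = 0"
    using False by (auto simp: erlang_density_def)
  ultimately show ?thesis by simp
next
  case True
  define c where "c = l ^ Suc (Suc m) * exp (- l * G) / fact m"
  define \<phi> where "\<phi> x = x ^ Suc m / G ^ Suc m" for x
  define \<phi>' where "\<phi>' x = real (Suc m) * x ^ m / G ^ Suc m" for x
  have c: "0 \<le> c" using l by (simp add: c_def)
  have "(\<integral>\<^sup>+g. ennreal (erlang_density m l g) * ennreal (exponential_density l (G - g)) * k ((g/G)^(Suc m)) \<partial>lborel)
      = (\<integral>\<^sup>+g. ennreal c * (ennreal (G ^ Suc m / real (Suc m)) * (k (\<phi> g) * ennreal (\<phi>' g) * indicator {0..G} g)) \<partial>lborel)"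
  proof (rule nn_integral_cong)
    fix g :: real
    show "ennreal (erlang_density m l g) * ennreal (exponential_density l (G - g)) * k ((g/G)^(Suc m))
        = ennreal c * (ennreal (G ^ Suc m / real (Suc m)) * (k (\<phi> g) * ennreal (\<phi>' g) * indicator {0..G} g))"
    proof (cases "g \<in> {0..G}")
      case True
      have "erlang_density m l g * exponential_density l (G - g) = c * (G ^ Suc m / real (Suc m) * \<phi>' g)"
      proof -
        have e: "exp (- l * g) * exp (- (G - g) * l) = exp (- l * G)"
          by (simp add: exp_add[symmetric] algebra_simps)
        have p: "G ^ Suc m / real (Suc m) * \<phi>' g = g ^ m"
          using \<open>0 < G\<close> unfolding \<phi>'_def by (simp add: field_simps del: of_nat_Suc power_Suc)
        have "erlang_density m l g * exponential_density l (G - g)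
             = l ^ Suc (Suc m) * g ^ m * (exp (- l * g) * exp (- (G - g) * l)) / fact m"
          using True by (simp add: erlang_density_def exponential_density_def field_simps)
        also have "\<dots> = c * g ^ m" unfolding e c_def by (simp add: mult_ac)
        finally show ?thesis by (simp only: p)
      qed
      then have "ennreal (erlang_density m l g) * ennreal (exponential_density l (G - g))
           = ennreal c * (ennreal (G ^ Suc m / real (Suc m)) * ennreal (\<phi>' g))"
        using True \<open>0 < G\<close> l c
        by (simp add: ennreal_mult[symmetric] \<phi>'_def erlang_density_def exponential_density_def)
      then show ?thesis using True by (simp add: \<phi>_def mult_ac power_divide)
    next
      case False
      then show ?thesis
        using \<open>0 < G\<close> by (auto simp: erlang_density_def exponential_density_def)
    qed
  qed
  also have "\<dots> = ennreal c * (ennreal (G ^ Suc m / real (Suc m)) *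
        (\<integral>\<^sup>+g. k (\<phi> g) * ennreal (\<phi>' g) * indicator {0..G} g \<partial>lborel))"
    by (simp add: nn_integral_cmult \<phi>_def \<phi>'_def)
  also have "(\<integral>\<^sup>+g. k (\<phi> g) * ennreal (\<phi>' g) * indicator {0..G} g \<partial>lborel)
      = (\<integral>\<^sup>+u. k u * indicator {\<phi> 0..\<phi> G} u \<partial>lborel)"
  proof (rule nn_integral_substitution_aux[symmetric])
    show "k \<in> borel_measurable borel" by fact
    show "\<And>x. 0 \<le> k x" by simp
    fix x assume x: "x \<in> {0..G}"
    show "(\<phi> has_real_derivative \<phi>' x) (at x)"
      unfolding \<phi>_def \<phi>'_def using DERIV_cdivide[OF DERIV_pow[of "Suc m" x], of "G ^ Suc m"] by simp
    show "0 \<le> \<phi>' x" using x by (simp add: \<phi>'_def)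
  next
    show "continuous_on {0..G} \<phi>'" unfolding \<phi>'_def by (intro continuous_intros) (use \<open>0 < G\<close> in auto)
    show "0 < G" by fact
  qed
  also have "(\<integral>\<^sup>+u. k u * indicator {\<phi> 0..\<phi> G} u \<partial>lborel) = (\<integral>\<^sup>+u. indicator {0..1} u * k u \<partial>lborel)"
    using \<open>0 < G\<close> by (simp add: \<phi>_def mult.commute)
  also have "ennreal c * (ennreal (G ^ Suc m / real (Suc m)) * (\<integral>\<^sup>+u. indicator {0..1} u * k u \<partial>lborel))
      = ennreal (c * (G ^ Suc m / real (Suc m))) * (\<integral>\<^sup>+u. indicator {0..1} u * k u \<partial>lborel)"
  proof -
    have "ennreal (c * (G ^ Suc m / real (Suc m))) = ennreal c * ennreal (G ^ Suc m / real (Suc m))"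
      by (rule ennreal_mult) (use c \<open>0 < G\<close> in auto)
    then show ?thesis by (simp only: mult.assoc)
  qed
  also have "c * (G ^ Suc m / real (Suc m)) = erlang_density (Suc m) l G"
    using \<open>0 < G\<close> by (simp add: c_def erlang_density_def field_simps)
  finally show ?thesis .
qed


lemma step2d:
  fixes k :: "real \<Rightarrow> real \<Rightarrow> ennreal"
  assumes l: "0 < l" and k[measurable]: "(\<lambda>(G, u). k G u) \<in> borel_measurable (borel \<Otimes>\<^sub>M borel)"
  shows "(\<integral>\<^sup>+g. ennreal (erlang_density m l g) * (\<integral>\<^sup>+e. ennreal (exponential_density l e) * k (g + e) ((g / (g + e)) ^ Suc m) \<partial>lborel) \<partial>lborel)
       = (\<integral>\<^sup>+G. ennreal (erlang_density (Suc m) l G) * (\<integral>\<^sup>+u. indicator {0..1} u * k G u \<partial>lborel) \<partial>lborel)"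
proof -
  have inner: "(\<integral>\<^sup>+e. ennreal (exponential_density l e) * k (g + e) ((g / (g + e)) ^ Suc m) \<partial>lborel)
      = (\<integral>\<^sup>+G. ennreal (exponential_density l (G - g)) * k G ((g / G) ^ Suc m) \<partial>lborel)" for g
    using nn_integral_real_affine[of "\<lambda>G. ennreal (exponential_density l (G - g)) * k G ((g / G) ^ Suc m)" 1 g]
    by simp
  have "(\<integral>\<^sup>+g. ennreal (erlang_density m l g) * (\<integral>\<^sup>+e. ennreal (exponential_density l e) * k (g + e) ((g / (g + e)) ^ Suc m) \<partial>lborel) \<partial>lborel)
      = (\<integral>\<^sup>+g. \<integral>\<^sup>+G. ennreal (erlang_density m l g) * ennreal (exponential_density l (G - g)) * k G ((g / G) ^ Suc m) \<partial>lborel \<partial>lborel)"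
    unfolding inner
  proof (rule nn_integral_cong)
    fix g :: real
    show "ennreal (erlang_density m l g) * (\<integral>\<^sup>+G. ennreal (exponential_density l (G - g)) * k G ((g / G) ^ Suc m) \<partial>lborel)
      = (\<integral>\<^sup>+G. ennreal (erlang_density m l g) * ennreal (exponential_density l (G - g)) * k G ((g / G) ^ Suc m) \<partial>lborel)"
      by (subst nn_integral_cmult[symmetric]) (measurable, simp only: mult.assoc)
  qed
  also have "\<dots> = (\<integral>\<^sup>+G. \<integral>\<^sup>+g. ennreal (erlang_density m l g) * ennreal (exponential_density l (G - g)) * k G ((g / G) ^ Suc m) \<partial>lborel \<partial>lborel)"
    by (rule lborel_pair.Fubini'[symmetric]) measurable
  also have "\<dots> = (\<integral>\<^sup>+G. ennreal (erlang_density (Suc m) l G) * (\<integral>\<^sup>+u. indicator {0..1} u * k G u \<partial>lborel) \<partial>lborel)"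
    by (rule nn_integral_cong, rule step2d_inner[OF l]) measurable
  finally show ?thesis .
qed


lemma (in prob_space) indep_nn_integral:
  assumes ind: "indep_var N1 X1 N2 X2" and dX: "distributed M lborel (\<lambda>\<omega>. p (X2 \<omega>)) f"
    and p[measurable]: "p \<in> N2 \<rightarrow>\<^sub>M borel"
    and F[measurable]: "case_prod F \<in> borel_measurable (N1 \<Otimes>\<^sub>M borel)"
  shows "(\<integral>\<^sup>+\<omega>. F (X1 \<omega>) (p (X2 \<omega>)) \<partial>M) = (\<integral>\<^sup>+\<omega>. \<integral>\<^sup>+e. f e * F (X1 \<omega>) e \<partial>lborel \<partial>M)"
proof -
  have rv[measurable]: "X1 \<in> M \<rightarrow>\<^sub>M N1" "X2 \<in> M \<rightarrow>\<^sub>M N2"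
    using ind by (auto simp: indep_var_distribution_eq)
  have eq: "distr M N1 X1 \<Otimes>\<^sub>M distr M N2 X2 = distr M (N1 \<Otimes>\<^sub>M N2) (\<lambda>x. (X1 x, X2 x))"
    using ind by (simp add: indep_var_distribution_eq)
  have fm[measurable]: "f \<in> borel_measurable borel"
    using dX by (simp add: distributed_def)
  interpret P2: prob_space "distr M N2 X2" using rv by (intro prob_space_distr) auto
  interpret P1: prob_space "distr M N1 X1" using rv by (intro prob_space_distr) auto
  have "(\<integral>\<^sup>+\<omega>. F (X1 \<omega>) (p (X2 \<omega>)) \<partial>M) = (\<integral>\<^sup>+q. F (fst q) (p (snd q)) \<partial>distr M (N1 \<Otimes>\<^sub>M N2) (\<lambda>x. (X1 x, X2 x)))"
    by (subst nn_integral_distr) auto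
  also have "\<dots> = (\<integral>\<^sup>+q. F (fst q) (p (snd q)) \<partial>(distr M N1 X1 \<Otimes>\<^sub>M distr M N2 X2))"
    by (simp add: eq)
  also have "\<dots> = (\<integral>\<^sup>+y. \<integral>\<^sup>+z. F y (p z) \<partial>distr M N2 X2 \<partial>distr M N1 X1)"
  proof -
    have "(\<lambda>q. F (fst q) (p (snd q))) \<in> borel_measurable (N1 \<Otimes>\<^sub>M N2)" by measurable
    then have "(\<lambda>q. F (fst q) (p (snd q))) \<in> borel_measurable (distr M N1 X1 \<Otimes>\<^sub>M distr M N2 X2)"
      by (subst measurable_cong_sets[OF sets_pair_measure_cong[OF sets_distr sets_distr] refl])
    then show ?thesis by (subst P2.nn_integral_fst[symmetric]) simp_all
  qed
  also have "\<dots> = (\<integral>\<^sup>+y. \<integral>\<^sup>+\<omega>. F y (p (X2 \<omega>)) \<partial>M \<partial>distr M N1 X1)"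
    by (intro nn_integral_cong) (subst nn_integral_distr, auto)
  also have "\<dots> = (\<integral>\<^sup>+y. \<integral>\<^sup>+e. f e * F y e \<partial>lborel \<partial>distr M N1 X1)"
    by (intro nn_integral_cong) (subst distributed_nn_integral[OF dX], auto)
  also have "\<dots> = (\<integral>\<^sup>+\<omega>. \<integral>\<^sup>+e. f e * F (X1 \<omega>) e \<partial>lborel \<partial>M)"
    by (subst nn_integral_distr) auto
  finally show ?thesis .
qed

locale expseq = prob_space M for M :: "'a measure" +
  fixes E :: "nat \<Rightarrow> 'a \<Rightarrow> real" and l :: real
  assumes l_pos: "0 < l"
    and indep: "indep_vars (\<lambda>_. borel) E UNIV"
    and distrE: "\<And>k. distributed M lborel (E k) (exponential_density l)"
begin

definition S :: "nat \<Rightarrow> 'a \<Rightarrow> real" where "S m \<omega> = (\<Sum>k\<le>m. E k \<omega>)"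
definition Pm :: "nat \<Rightarrow> 'a \<Rightarrow> real" where "Pm m \<omega> = (\<Prod>i\<le>m. S i \<omega>)"

lemma E_meas[measurable]: "E k \<in> borel_measurable M"
  using distrE[of k] by (simp add: distributed_def)

lemma S_meas[measurable]: "S m \<in> borel_measurable M" unfolding S_def by measurable
lemma Pm_meas[measurable]: "Pm m \<in> borel_measurable M" unfolding Pm_def by measurable

lemma S_Suc: "S (Suc m) \<omega> = S m \<omega> + E (Suc m) \<omega>" by (simp add: S_def)
lemma Pm_Suc: "Pm (Suc m) \<omega> = Pm m \<omega> * S (Suc m) \<omega>" by (simp add: Pm_def)

lemma indep_step: "indep_var (PiM {..m} (\<lambda>_. borel)) (\<lambda>\<omega>. restrict (\<lambda>i. E i \<omega>) {..m})
                  (PiM {Suc m} (\<lambda>_. borel)) (\<lambda>\<omega>. restrict (\<lambda>i. E i \<omega>) {Suc m})"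
  by (rule indep_var_restrict[OF indep]) auto

end


context expseq begin
lemma step_integral:
  assumes [measurable]: "h \<in> borel_measurable (borel \<Otimes>\<^sub>M borel)"
  shows "(\<integral>\<^sup>+\<omega>. h (S (Suc m) \<omega>, Pm (Suc m) \<omega>) \<partial>M)
    = (\<integral>\<^sup>+\<omega>. \<integral>\<^sup>+e. ennreal (exponential_density l e) * h (S m \<omega> + e, Pm m \<omega> * (S m \<omega> + e)) \<partial>lborel \<partial>M)"
proof -
  define F where "F x e = h ((\<Sum>k\<le>m. x k) + e, (\<Prod>i\<le>m. \<Sum>k\<le>i. x k) * ((\<Sum>k\<le>m. x k) + e))" for x :: "nat \<Rightarrow> real" and e
  have sv: "(\<Sum>k\<le>i. restrict (\<lambda>i. E i \<omega>) {..m} k) = S i \<omega>" if "i \<le> m" for i \<omega>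
    unfolding S_def using that by (intro sum.cong) auto
  have pv: "(\<Prod>i\<le>m. \<Sum>k\<le>i. restrict (\<lambda>i. E i \<omega>) {..m} k) = Pm m \<omega>" for \<omega>
    unfolding Pm_def by (intro prod.cong refl sv) auto
  have "(\<integral>\<^sup>+\<omega>. h (S (Suc m) \<omega>, Pm (Suc m) \<omega>) \<partial>M)
      = (\<integral>\<^sup>+\<omega>. F (restrict (\<lambda>i. E i \<omega>) {..m}) ((\<lambda>x. x (Suc m)) (restrict (\<lambda>i. E i \<omega>) {Suc m})) \<partial>M)"
    by (simp add: F_def S_def Pm_def)
  also have "\<dots> = (\<integral>\<^sup>+\<omega>. \<integral>\<^sup>+e. ennreal (exponential_density l e) * F (restrict (\<lambda>i. E i \<omega>) {..m}) e \<partial>lborel \<partial>M)"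
  proof (rule indep_nn_integral[OF indep_step])
    show "distributed M lborel (\<lambda>\<omega>. restrict (\<lambda>i. E i \<omega>) {Suc m} (Suc m)) (\<lambda>x. ennreal (exponential_density l x))"
      using distrE[of "Suc m"] by simp
    show "(\<lambda>x. x (Suc m)) \<in> PiM {Suc m} (\<lambda>_. borel) \<rightarrow>\<^sub>M borel" by measurable
    show "case_prod F \<in> borel_measurable (PiM {..m} (\<lambda>_. borel) \<Otimes>\<^sub>M borel)"
      unfolding F_def by measurable
  qed
  also have "\<dots> = (\<integral>\<^sup>+\<omega>. \<integral>\<^sup>+e. ennreal (exponential_density l e) * h (S m \<omega> + e, Pm m \<omega> * (S m \<omega> + e)) \<partial>lborel \<partial>M)"
    by (simp add: F_def S_def Pm_def)
  finally show ?thesis .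
qed

end

context expseq begin

lemma law:
  assumes "h \<in> borel_measurable (borel \<Otimes>\<^sub>M borel)"
  shows "(\<integral>\<^sup>+\<omega>. h (S m \<omega>, Pm m \<omega>) \<partial>M)
       = (\<integral>\<^sup>+g. ennreal (erlang_density m l g) * (\<integral>\<^sup>+v. h (g, g ^ Suc m * v) \<partial>nu m) \<partial>lborel)"
  using assms
proof (induction m arbitrary: h)
  case 0
  note [measurable] = "0.prems"
  have "(\<integral>\<^sup>+\<omega>. h (S 0 \<omega>, Pm 0 \<omega>) \<partial>M) = (\<integral>\<^sup>+\<omega>. (\<lambda>x. h (x, x)) (E 0 \<omega>) \<partial>M)"
    by (simp add: S_def Pm_def)
  also have "\<dots> = (\<integral>\<^sup>+g. ennreal (exponential_density l g) * h (g, g) \<partial>lborel)"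
    by (rule distributed_nn_integral[OF distrE[of 0], symmetric]) measurable
  also have "\<dots> = (\<integral>\<^sup>+g. ennreal (erlang_density 0 l g) * (\<integral>\<^sup>+v. h (g, g ^ Suc 0 * v) \<partial>nu 0) \<partial>lborel)"
    by (simp add: nn_integral_return)
  finally show ?case .
next
  case (Suc m)
  note hm[measurable] = Suc.prems
  interpret N: prob_space "nu m" by (rule prob_space_nu)
  interpret NP: pair_sigma_finite "nu m" lborel ..
  define h' where "h' p = (\<integral>\<^sup>+e. ennreal (exponential_density l e) * h (fst p + e, snd p * (fst p + e)) \<partial>lborel)" for p
  have h'm[measurable]: "h' \<in> borel_measurable (borel \<Otimes>\<^sub>M borel)"
    unfolding h'_def by measurable
  define k where "k G u = (\<integral>\<^sup>+v. h (G, G ^ Suc (Suc m) * (v * u)) \<partial>nu m)" for G u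
  have km[measurable]: "(\<lambda>(G, u). k G u) \<in> borel_measurable (borel \<Otimes>\<^sub>M borel)"
    unfolding k_def by measurable
  have "(\<integral>\<^sup>+\<omega>. h (S (Suc m) \<omega>, Pm (Suc m) \<omega>) \<partial>M) = (\<integral>\<^sup>+\<omega>. h' (S m \<omega>, Pm m \<omega>) \<partial>M)"
    unfolding h'_def fst_conv snd_conv by (rule step_integral) fact
  also have "\<dots> = (\<integral>\<^sup>+g. ennreal (erlang_density m l g) * (\<integral>\<^sup>+v. h' (g, g ^ Suc m * v) \<partial>nu m) \<partial>lborel)"
    by (rule Suc.IH) fact
  also have "\<dots> = (\<integral>\<^sup>+g. ennreal (erlang_density m l g) *
        (\<integral>\<^sup>+e. ennreal (exponential_density l e) * k (g + e) ((g / (g + e)) ^ Suc m) \<partial>lborel) \<partial>lborel)"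
  proof (rule nn_integral_cong)
    fix g :: real
    have "(\<integral>\<^sup>+v. h' (g, g ^ Suc m * v) \<partial>nu m)
        = (\<integral>\<^sup>+v. \<integral>\<^sup>+e. ennreal (exponential_density l e) * h (g + e, g ^ Suc m * v * (g + e)) \<partial>lborel \<partial>nu m)"
      by (simp add: h'_def)
    also have "\<dots> = (\<integral>\<^sup>+e. \<integral>\<^sup>+v. ennreal (exponential_density l e) * h (g + e, g ^ Suc m * v * (g + e)) \<partial>nu m \<partial>lborel)"
      by (rule NP.Fubini'[symmetric]) measurable
    also have "\<dots> = (\<integral>\<^sup>+e. ennreal (exponential_density l e) * (\<integral>\<^sup>+v. h (g + e, g ^ Suc m * v * (g + e)) \<partial>nu m) \<partial>lborel)"
      by (intro nn_integral_cong nn_integral_cmult) measurable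
    also have "\<dots> = (\<integral>\<^sup>+e. ennreal (exponential_density l e) * k (g + e) ((g / (g + e)) ^ Suc m) \<partial>lborel)"
    proof (rule nn_integral_cong_AE)
      show "AE e in lborel. ennreal (exponential_density l e) * (\<integral>\<^sup>+v. h (g + e, g ^ Suc m * v * (g + e)) \<partial>nu m)
          = ennreal (exponential_density l e) * k (g + e) ((g / (g + e)) ^ Suc m)"
        using AE_lborel_singleton[of "-g"]
      proof eventually_elim
        case (elim e)
        then have ne: "g + e \<noteq> 0" by auto
        have "(g + e) ^ Suc (Suc m) * (v * (g / (g + e)) ^ Suc m) = g ^ Suc m * v * (g + e)" for v
        proof -
          have "(g + e) ^ Suc m * (g / (g + e)) ^ Suc m = g ^ Suc m"
            using ne by (simp add: power_mult_distrib[symmetric])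
          moreover have "(g + e) ^ Suc (Suc m) * (v * (g / (g + e)) ^ Suc m)
              = (g + e) * v * ((g + e) ^ Suc m * (g / (g + e)) ^ Suc m)"
            by (simp only: power_Suc[of "g + e" "Suc m"] mult_ac)
          ultimately show ?thesis by (simp add: mult_ac)
        qed
        then show ?case by (simp add: k_def)
      qed
    qed
    finally show "ennreal (erlang_density m l g) * (\<integral>\<^sup>+v. h' (g, g ^ Suc m * v) \<partial>nu m)
      = ennreal (erlang_density m l g) * (\<integral>\<^sup>+e. ennreal (exponential_density l e) * k (g + e) ((g / (g + e)) ^ Suc m) \<partial>lborel)"
      by simp
  qed
  also have "\<dots> = (\<integral>\<^sup>+G. ennreal (erlang_density (Suc m) l G) * (\<integral>\<^sup>+u. indicator {0..1} u * k G u \<partial>lborel) \<partial>lborel)"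
    by (rule step2d[OF l_pos km])
  also have "\<dots> = (\<integral>\<^sup>+G. ennreal (erlang_density (Suc m) l G) * (\<integral>\<^sup>+w. h (G, G ^ Suc (Suc m) * w) \<partial>nu (Suc m)) \<partial>lborel)"
    by (intro nn_integral_cong, subst nn_integral_nu_Suc') (measurable, simp add: k_def)
  finally show ?case .
qed

end

context expseq begin

definition Q :: "nat \<Rightarrow> 'a \<Rightarrow> real" where "Q n \<omega> = (\<Prod>i<n. min (S i \<omega>) 1)"

lemma X_eq: "prod_min_partial_sums E \<omega> = lim (\<lambda>n. Q n \<omega>)"
  by (simp add: prod_min_partial_sums_def Q_def S_def)

lemma X_meas[measurable]: "prod_min_partial_sums E \<in> borel_measurable M"
proof -
  have "(\<lambda>\<omega>. lim (\<lambda>n. Q n \<omega>)) \<in> borel_measurable M" unfolding Q_def by measurable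
  then show ?thesis by (simp add: X_eq[abs_def])
qed

lemma AE_E_nonneg: "AE \<omega> in M. \<forall>k. 0 \<le> E k \<omega>"
  unfolding AE_all_countable
proof
  fix k
  have eq: "distr M lborel (E k) = density lborel (\<lambda>x. ennreal (exponential_density l x))"
    using distrE[of k] by (simp add: distributed_def)
  have "AE x in distr M lborel (E k). 0 \<le> x"
    unfolding eq by (subst AE_density) (auto simp: exponential_density_def)
  then show "AE \<omega> in M. 0 \<le> E k \<omega>" by (rule AE_distrD[rotated]) measurable
qed

context
  fixes \<omega> assumes nn: "\<forall>k. 0 \<le> E k \<omega>"
begin

lemma S_mono: "i \<le> j \<Longrightarrow> S i \<omega> \<le> S j \<omega>"
  unfolding S_def by (rule sum_mono2) (use nn in auto)

lemma S_nonneg: "0 \<le> S i \<omega>"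
  unfolding S_def using nn by (simp add: sum_nonneg)

lemma Q_nonneg: "0 \<le> Q n \<omega>"
  unfolding Q_def using S_nonneg by (simp add: prod_nonneg)

lemma Q_le1: "Q n \<omega> \<le> 1"
  unfolding Q_def using S_nonneg by (intro prod_le_1) auto

lemma Q_dec: "decseq (\<lambda>n. Q n \<omega>)"
proof (rule decseq_SucI)
  fix n
  have "Q (Suc n) \<omega> = Q n \<omega> * min (S n \<omega>) 1" by (simp add: Q_def)
  also have "\<dots> \<le> Q n \<omega> * 1" using Q_nonneg by (intro mult_left_mono) auto
  finally show "Q (Suc n) \<omega> \<le> Q n \<omega>" by simp
qed

lemma Q_lim: "(\<lambda>n. Q n \<omega>) \<longlonglongrightarrow> prod_min_partial_sums E \<omega>"
proof -
  have "\<forall>i. 0 \<le> Q i \<omega>" using Q_nonneg by blast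
  then obtain L where L: "(\<lambda>n. Q n \<omega>) \<longlonglongrightarrow> L"
    using decseq_convergent[OF Q_dec] by blast
  then show ?thesis by (simp add: X_eq limI)
qed

lemma X_le_Q: "prod_min_partial_sums E \<omega> \<le> Q n \<omega>"
  by (rule decseq_ge[OF Q_dec Q_lim])

lemma Q_Pm:
  assumes "S m \<omega> < 1" shows "Q (Suc m) \<omega> = Pm m \<omega>"
  unfolding Q_def Pm_def lessThan_Suc_atMost
proof (intro prod.cong refl)
  fix i assume "i \<in> {..m}"
  then have "S i \<omega> \<le> S m \<omega>" by (intro S_mono) auto
  with assms show "min (S i \<omega>) 1 = S i \<omega>" by simp
qed

lemma Q_cases: "Q n \<omega> = 1 \<or> (\<exists>m. S m \<omega> < 1 \<and> Pm m \<omega> = Q n \<omega>)"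
proof (induction n)
  case 0 then show ?case by (simp add: Q_def)
next
  case (Suc n)
  show ?case
  proof (cases "S n \<omega> < 1")
    case True then show ?thesis using Q_Pm[of n] by auto
  next
    case False
    then have "Q (Suc n) \<omega> = Q n \<omega>" by (simp add: Q_def)
    then show ?thesis using Suc.IH by simp
  qed
qed

lemma X_small:
  assumes "prod_min_partial_sums E \<omega> < \<tau>" "\<tau> \<le> 1"
  shows "\<exists>m. S m \<omega> < 1 \<and> Pm m \<omega> < \<tau>"
proof -
  have "eventually (\<lambda>n. Q n \<omega> < \<tau>) sequentially"
    using Q_lim assms(1) by (rule order_tendstoD)
  then obtain n where "Q n \<omega> < \<tau>" by (auto simp: eventually_sequentially)
  then show ?thesis using Q_cases[of n] assms(2) by auto
qed

end

end

lemma nn_integral_powr_01_gen: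
  assumes "-1 < a"
  shows "(\<integral>\<^sup>+u. indicator {0..1} u * ennreal (u powr a) \<partial>lborel) = ennreal (1 / (a + 1))"
proof -
  have "((\<lambda>x. x powr a) has_integral (1 powr (a+1) / (a+1))) {0..1}"
    by (rule has_integral_powr_from_0) (use assms in auto)
  then have "integral\<^sup>N lborel (\<lambda>x. indicator {0..1} x * (x powr a)) = 1 / (a + 1)"
    by (subst nn_integral_has_integral_lebesgue) auto
  moreover have "(\<integral>\<^sup>+u. indicator {0..1} u * ennreal (u powr a) \<partial>lborel)
     = integral\<^sup>N lborel (\<lambda>x. indicator {0..1} x * (x powr a))"
    by (rule nn_integral_cong) (auto simp: indicator_def)
  ultimately show ?thesis by simp
qed

context expseq begin

lemma A_bound:
  assumes s: "0 < s" "s < 1" and \<tau>: "0 < \<tau>"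
  shows "emeasure M {\<omega>\<in>space M. S m \<omega> < 1 \<and> Pm m \<omega> < \<tau>}
    \<le> ennreal (\<tau> powr s * (l / (1 - s)) ^ Suc m / fact (Suc m))"
proof -
  define C where "C = l ^ Suc m / fact m * (\<tau> powr s / (1 - s) ^ m)"
  define a where "a = real m - real (Suc m) * s"
  have C: "0 \<le> C" using l_pos s unfolding C_def by (intro mult_nonneg_nonneg divide_nonneg_nonneg) auto
  have a: "-1 < a" using s by (simp add: a_def algebra_simps) (smt (verit) mult_left_le_one_le of_nat_0_le_iff)
  have hm[measurable]: "indicator ({..<1} \<times> {..<\<tau>}) \<in> borel_measurable (borel \<Otimes>\<^sub>M borel :: (real \<times> real) measure)"
    by measurable
  have "emeasure M {\<omega>\<in>space M. S m \<omega> < 1 \<and> Pm m \<omega> < \<tau>}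
      = (\<integral>\<^sup>+\<omega>. indicator ({..<1} \<times> {..<\<tau>}) (S m \<omega>, Pm m \<omega>) \<partial>M)"
  proof -
    have "emeasure M {\<omega>\<in>space M. S m \<omega> < 1 \<and> Pm m \<omega> < \<tau>}
        = (\<integral>\<^sup>+\<omega>. indicator {\<omega>\<in>space M. S m \<omega> < 1 \<and> Pm m \<omega> < \<tau>} \<omega> \<partial>M)"
      by (rule nn_integral_indicator[symmetric]) measurable
    also have "\<dots> = (\<integral>\<^sup>+\<omega>. indicator ({..<1} \<times> {..<\<tau>}) (S m \<omega>, Pm m \<omega>) \<partial>M)"
      by (rule nn_integral_cong) (auto simp: indicator_def)
    finally show ?thesis .
  qed
  also have "\<dots> = (\<integral>\<^sup>+g. ennreal (erlang_density m l g) *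
      (\<integral>\<^sup>+v. indicator ({..<1} \<times> {..<\<tau>}) (g, g ^ Suc m * v) \<partial>nu m) \<partial>lborel)"
    by (rule law) measurable
  also have "\<dots> \<le> (\<integral>\<^sup>+g. ennreal C * (indicator {0..1} g * ennreal (g powr a)) \<partial>lborel)"
  proof (rule nn_integral_mono_AE)
    show "AE g in lborel. ennreal (erlang_density m l g) *
      (\<integral>\<^sup>+v. indicator ({..<1} \<times> {..<\<tau>}) (g, g ^ Suc m * v) \<partial>nu m)
      \<le> ennreal C * (indicator {0..1} g * ennreal (g powr a))"
      using AE_lborel_singleton[of 0]
    proof eventually_elim
      case (elim g)
      show ?case
      proof (cases "0 < g \<and> g < 1")
        case False
        then have "g < 0 \<or> 1 \<le> g" using elim by auto
        then show ?thesis
        proof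
          assume "g < 0" then show ?thesis by (simp add: erlang_density_def)
        next
          assume "1 \<le> g" then show ?thesis by (simp add: indicator_def)
        qed
      next
        case True
        then have g: "0 < g" "g < 1" by auto
        have gp: "0 < g ^ Suc m" using g by simp
        have "(\<integral>\<^sup>+v. indicator ({..<1} \<times> {..<\<tau>}) (g, g ^ Suc m * v) \<partial>nu m)
            \<le> (\<integral>\<^sup>+v. indicator {..\<tau> / g ^ Suc m} v \<partial>nu m)"
          using g gp by (intro nn_integral_mono) (auto simp: indicator_def pos_le_divide_eq mult.commute)
        also have "\<dots> = emeasure (nu m) {..\<tau> / g ^ Suc m}" by simp
        also have "\<dots> \<le> ennreal ((\<tau> / g ^ Suc m) powr s / (1 - s) ^ m)"
          by (rule nu_upper) (use s \<tau> gp in auto)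
        finally have I: "(\<integral>\<^sup>+v. indicator ({..<1} \<times> {..<\<tau>}) (g, g ^ Suc m * v) \<partial>nu m)
            \<le> ennreal ((\<tau> / g ^ Suc m) powr s / (1 - s) ^ m)" .
        have "erlang_density m l g * ((\<tau> / g ^ Suc m) powr s / (1 - s) ^ m)
            = C * exp (- l * g) * (g powr real m * g powr (- (real (Suc m) * s)))"
        proof -
          have gs: "g ^ Suc m = g powr real (Suc m)" using g by (simp only: powr_realpow)
          have e1: "(\<tau> / g ^ Suc m) powr s = \<tau> powr s * g powr (- (real (Suc m) * s))"
          proof -
            have "(\<tau> / g ^ Suc m) powr s = \<tau> powr s / (g powr real (Suc m)) powr s"
              unfolding gs by (rule powr_divide)
            also have "(g powr real (Suc m)) powr s = g powr (real (Suc m) * s)" by (rule powr_powr)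
            also have "\<tau> powr s / g powr (real (Suc m) * s) = \<tau> powr s * g powr (- (real (Suc m) * s))"
              by (simp add: powr_minus_divide)
            finally show ?thesis .
          qed
          have e2: "g ^ m = g powr real m" using g by (simp add: powr_realpow)
          show ?thesis
            unfolding e1 using g
            by (simp add: erlang_density_def C_def e2 field_simps del: of_nat_Suc)
        qed
        also have "\<dots> \<le> C * 1 * (g powr real m * g powr (- (real (Suc m) * s)))"
          using C l_pos g by (intro mult_right_mono mult_left_mono) auto
        also have "g powr real m * g powr (- (real (Suc m) * s)) = g powr a"
          by (simp add: a_def powr_add[symmetric] algebra_simps)
        finally have R: "erlang_density m l g * ((\<tau> / g ^ Suc m) powr s / (1 - s) ^ m) \<le> C * g powr a"
          by simp
        have "ennreal (erlang_density m l g) * (\<integral>\<^sup>+v. indicator ({..<1} \<times> {..<\<tau>}) (g, g ^ Suc m * v) \<partial>nu m)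
            \<le> ennreal (erlang_density m l g) * ennreal ((\<tau> / g ^ Suc m) powr s / (1 - s) ^ m)"
          by (rule mult_left_mono[OF I]) simp
        also have "\<dots> = ennreal (erlang_density m l g * ((\<tau> / g ^ Suc m) powr s / (1 - s) ^ m))"
          using l_pos s by (subst ennreal_mult) auto
        also have "\<dots> \<le> ennreal (C * g powr a)"
          using R by (rule ennreal_leI)
        also have "\<dots> = ennreal C * (indicator {0..1} g * ennreal (g powr a))"
          using g C by (simp add: ennreal_mult)
        finally show ?thesis .
      qed
    qed
  qed
  also have "\<dots> = ennreal C * (\<integral>\<^sup>+g. indicator {0..1} g * ennreal (g powr a) \<partial>lborel)"
    by (rule nn_integral_cmult) measurable
  also have "\<dots> = ennreal C * ennreal (1 / (a + 1))"
    by (simp add: nn_integral_powr_01_gen[OF a])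
  also have "\<dots> = ennreal (C * (1 / (a + 1)))"
    using C a by (intro ennreal_mult[symmetric]) auto
  also have "C * (1 / (a + 1)) = \<tau> powr s * (l / (1 - s)) ^ Suc m / fact (Suc m)"
  proof -
    have aeq: "a + 1 = real (Suc m) * (1 - s)" by (simp add: a_def algebra_simps)
    have "(1 - s) ^ m \<noteq> 0" using s by simp
    then show ?thesis using s unfolding aeq C_def fact_Suc power_divide
      by (simp add: field_simps del: of_nat_Suc)
  qed
  finally show ?thesis .
qed

end

context expseq begin

lemma upper:
  assumes t: "0 < t" "2 * t \<le> 1" and s: "0 < s" "s < 1"
  shows "measure M {\<omega>\<in>space M. prod_min_partial_sums E \<omega> \<le> t} \<le> (2 * t) powr s * exp (l / (1 - s))"
proof -
  define \<tau> where "\<tau> = 2 * t"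
  define x where "x = l / (1 - s)"
  define A where "A m = {\<omega>\<in>space M. S m \<omega> < 1 \<and> Pm m \<omega> < \<tau>}" for m
  have Am: "A m \<in> sets M" for m unfolding A_def by measurable
  have \<tau>: "0 < \<tau>" "\<tau> \<le> 1" using t by (auto simp: \<tau>_def)
  have sm: "(\<lambda>m. \<tau> powr s * (x ^ Suc m / fact (Suc m))) sums (\<tau> powr s * (exp x - 1))"
  proof -
    have "(\<lambda>n. x ^ n / fact n) sums exp x"
      using exp_converges[of x] by (simp add: divide_inverse_commute scaleR_conv_of_real)
    then have "(\<lambda>n. x ^ Suc n / fact (Suc n)) sums (exp x - 1)"
      by (subst sums_Suc_iff) simp
    then show ?thesis by (rule sums_mult)
  qed
  have "emeasure M {\<omega>\<in>space M. prod_min_partial_sums E \<omega> \<le> t} \<le> emeasure M (\<Union>m. A m)"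
  proof (rule emeasure_mono_AE)
    show "AE \<omega> in M. \<omega> \<in> {\<omega> \<in> space M. prod_min_partial_sums E \<omega> \<le> t} \<longrightarrow> \<omega> \<in> (\<Union>m. A m)"
      using AE_E_nonneg
    proof eventually_elim
      case (elim \<omega>)
      show ?case
      proof
        assume "\<omega> \<in> {\<omega> \<in> space M. prod_min_partial_sums E \<omega> \<le> t}"
        then have "\<omega> \<in> space M" "prod_min_partial_sums E \<omega> < \<tau>" using t by (auto simp: \<tau>_def)
        then show "\<omega> \<in> (\<Union>m. A m)" using X_small[OF elim _ \<tau>(2)] by (auto simp: A_def)
      qed
    qed
    show "(\<Union>m. A m) \<in> sets M" using Am by auto
  qed
  also have "\<dots> \<le> (\<Sum>m. emeasure M (A m))"
    by (rule emeasure_subadditive_countably) (use Am in auto)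
  also have "\<dots> \<le> (\<Sum>m. ennreal (\<tau> powr s * (x ^ Suc m / fact (Suc m))))"
    by (intro suminf_le summableI) (use A_bound[OF s \<tau>(1)] in \<open>simp add: A_def x_def\<close>)
  also have "\<dots> = ennreal (\<tau> powr s * (exp x - 1))"
    using sm l_pos s by (subst suminf_ennreal2) (auto simp: sums_iff x_def)
  finally have "emeasure M {\<omega>\<in>space M. prod_min_partial_sums E \<omega> \<le> t} \<le> ennreal (\<tau> powr s * (exp x - 1))" .
  moreover have "0 \<le> \<tau> powr s * (exp x - 1)"
    using l_pos s by (intro mult_nonneg_nonneg) (auto simp: x_def)
  ultimately have "measure M {\<omega>\<in>space M. prod_min_partial_sums E \<omega> \<le> t} \<le> \<tau> powr s * (exp x - 1)"
    by (simp add: emeasure_eq_measure)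
  also have "\<dots> \<le> \<tau> powr s * exp x" by (intro mult_left_mono) auto
  finally show ?thesis by (simp add: \<tau>_def x_def)
qed

end

context expseq begin

lemma erlang_01_lower:
  "ennreal (exp (- l) * l ^ Suc (Suc m) / fact (Suc (Suc m)))
    \<le> (\<integral>\<^sup>+g. ennreal (erlang_density (Suc m) l g) * indicator {0..<1} g \<partial>lborel)"
proof -
  define c where "c = l ^ Suc (Suc m) * exp (- l) / fact (Suc m)"
  have c: "0 \<le> c" using l_pos by (simp add: c_def)
  define F where "F g = c * g ^ Suc (Suc m) / real (Suc (Suc m))" for g
  have "ennreal (exp (- l) * l ^ Suc (Suc m) / fact (Suc (Suc m))) = ennreal (F 1 - F 0)"
    by (simp add: F_def c_def fact_Suc[of "Suc m"] field_simps del: of_nat_Suc fact_Suc)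
  also have "\<dots> = (\<integral>\<^sup>+g. ennreal (c * g ^ Suc m) * indicator {0..1} g \<partial>lborel)"
  proof (rule nn_integral_FTC_Icc[symmetric])
    fix x :: real assume x: "x \<in> {0..1}"
    show "(F has_real_derivative c * x ^ Suc m) (at x)"
      unfolding F_def
      by (rule DERIV_cong[OF DERIV_cdivide[OF DERIV_cmult[OF DERIV_pow[of "Suc (Suc m)" x]]], of c "real (Suc (Suc m))"])
         (simp del: of_nat_Suc power_Suc)
    show "0 \<le> c * x ^ Suc m" using x c by simp
  qed auto
  also have "\<dots> \<le> (\<integral>\<^sup>+g. ennreal (erlang_density (Suc m) l g) * indicator {0..<1} g \<partial>lborel)"
  proof (rule nn_integral_mono_AE)
    show "AE g in lborel. ennreal (c * g ^ Suc m) * indicator {0..1} g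
        \<le> ennreal (erlang_density (Suc m) l g) * indicator {0..<1} g"
      using AE_lborel_singleton[of 1]
    proof eventually_elim
      case (elim g)
      show ?case
      proof (cases "g \<in> {0..<1}")
        case True
        then have g: "0 \<le> g" "g < 1" by auto
        have "exp (- l) \<le> exp (- l * g)" using g l_pos by (simp add: mult_left_le_one_le)
        then have "c * g ^ Suc m \<le> erlang_density (Suc m) l g"
          using g l_pos
          by (auto simp: c_def erlang_density_def divide_right_mono mult_left_mono field_simps
              intro!: divide_right_mono mult_left_mono)
        then show ?thesis using True by (simp add: ennreal_leI)
      next
        case False
        then show ?thesis using elim by (auto simp: indicator_def)
      qed
    qed
  qed
  finally show ?thesis .
qed

end

context expseq begin

lemma lower:
  assumes t: "0 < t" "t \<le> 1"
  shows "exp (- l) * l ^ Suc (Suc m) / fact (Suc (Suc m)) * (t * (- ln t) ^ m / fact m)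
    \<le> measure M {\<omega>\<in>space M. prod_min_partial_sums E \<omega> \<le> t}"
proof -
  define B where "B = {\<omega>\<in>space M. S (Suc m) \<omega> < 1 \<and> Pm (Suc m) \<omega> \<le> t}"
  define a where "a = exp (- l) * l ^ Suc (Suc m) / fact (Suc (Suc m))"
  define b where "b = t * (- ln t) ^ m / fact m"
  have a: "0 \<le> a" using l_pos by (simp add: a_def)
  have b: "0 \<le> b" using t by (simp add: b_def)
  have hm[measurable]: "indicator ({..<1} \<times> {..t}) \<in> borel_measurable (borel \<Otimes>\<^sub>M borel :: (real \<times> real) measure)"
    by measurable
  have "emeasure M B = (\<integral>\<^sup>+\<omega>. indicator B \<omega> \<partial>M)"
    by (rule nn_integral_indicator[symmetric]) (unfold B_def, measurable)
  also have "\<dots> = (\<integral>\<^sup>+\<omega>. indicator ({..<1} \<times> {..t}) (S (Suc m) \<omega>, Pm (Suc m) \<omega>) \<partial>M)"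
    by (rule nn_integral_cong) (auto simp: indicator_def B_def)
  also have "\<dots> = (\<integral>\<^sup>+g. ennreal (erlang_density (Suc m) l g) *
      (\<integral>\<^sup>+v. indicator ({..<1} \<times> {..t}) (g, g ^ Suc (Suc m) * v) \<partial>nu (Suc m)) \<partial>lborel)"
    by (rule law) measurable
  also have "\<dots> \<ge> (\<integral>\<^sup>+g. ennreal (erlang_density (Suc m) l g) * indicator {0..<1} g * emeasure (nu (Suc m)) {..t} \<partial>lborel)"
  proof (rule nn_integral_mono)
    fix g :: real
    show "ennreal (erlang_density (Suc m) l g) * indicator {0..<1} g * emeasure (nu (Suc m)) {..t}
      \<le> ennreal (erlang_density (Suc m) l g) *
      (\<integral>\<^sup>+v. indicator ({..<1} \<times> {..t}) (g, g ^ Suc (Suc m) * v) \<partial>nu (Suc m))"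
    proof (cases "g \<in> {0..<1}")
      case True
      then have g: "0 \<le> g" "g < 1" by auto
      have "emeasure (nu (Suc m)) {..t} = (\<integral>\<^sup>+v. indicator {..t} v \<partial>nu (Suc m))" by simp
      also have "\<dots> \<le> (\<integral>\<^sup>+v. indicator ({..<1} \<times> {..t}) (g, g ^ Suc (Suc m) * v) \<partial>nu (Suc m))"
      proof (rule nn_integral_mono)
        fix v :: real
        have "v \<le> t \<Longrightarrow> g ^ Suc (Suc m) * v \<le> t"
        proof -
          assume v: "v \<le> t"
          show ?thesis
          proof (cases "0 \<le> v")
            case True
            have "g ^ Suc (Suc m) \<le> 1" using g by (intro power_le_one) auto
            then have "g ^ Suc (Suc m) * v \<le> 1 * v" using True by (intro mult_right_mono) auto
            then show ?thesis using v by simp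
          next
            case False
            then have "g ^ Suc (Suc m) * v \<le> 0" using g by (simp add: mult_nonneg_nonpos)
            then show ?thesis using t by simp
          qed
        qed
        then show "(indicator {..t} v :: ennreal) \<le> indicator ({..<1} \<times> {..t}) (g, g ^ Suc (Suc m) * v)"
          using g by (auto simp: indicator_def)
      qed
      finally show ?thesis using True by (simp add: mult_left_mono)
    qed simp
  qed
  finally have "(\<integral>\<^sup>+g. ennreal (erlang_density (Suc m) l g) * indicator {0..<1} g * emeasure (nu (Suc m)) {..t} \<partial>lborel)
      \<le> emeasure M B" .
  moreover have "(\<integral>\<^sup>+g. ennreal (erlang_density (Suc m) l g) * indicator {0..<1} g * emeasure (nu (Suc m)) {..t} \<partial>lborel)
      = (\<integral>\<^sup>+g. ennreal (erlang_density (Suc m) l g) * indicator {0..<1} g \<partial>lborel) * emeasure (nu (Suc m)) {..t}"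
    by (rule nn_integral_multc) measurable
  moreover have "ennreal a * ennreal b \<le> (\<integral>\<^sup>+g. ennreal (erlang_density (Suc m) l g) * indicator {0..<1} g \<partial>lborel) * emeasure (nu (Suc m)) {..t}"
    unfolding a_def b_def by (intro mult_mono erlang_01_lower nu_lower t) auto
  ultimately have "ennreal (a * b) \<le> emeasure M B"
    using a b by (simp add: ennreal_mult)
  also have "emeasure M B \<le> emeasure M {\<omega>\<in>space M. prod_min_partial_sums E \<omega> \<le> t}"
  proof (rule emeasure_mono_AE)
    show "AE \<omega> in M. \<omega> \<in> B \<longrightarrow> \<omega> \<in> {\<omega> \<in> space M. prod_min_partial_sums E \<omega> \<le> t}"
      using AE_E_nonneg
    proof eventually_elim
      case (elim \<omega>)
      show ?case
      proof
        assume "\<omega> \<in> B"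
        then have "\<omega> \<in> space M" "S (Suc m) \<omega> < 1" "Pm (Suc m) \<omega> \<le> t" by (auto simp: B_def)
        moreover have "prod_min_partial_sums E \<omega> \<le> Q (Suc (Suc m)) \<omega>" by (rule X_le_Q[OF elim])
        moreover have "Q (Suc (Suc m)) \<omega> = Pm (Suc m) \<omega>" by (rule Q_Pm[OF elim]) fact
        ultimately show "\<omega> \<in> {\<omega> \<in> space M. prod_min_partial_sums E \<omega> \<le> t}" by auto
      qed
    qed
    show "{\<omega> \<in> space M. prod_min_partial_sums E \<omega> \<le> t} \<in> sets M" by measurable
  qed
  finally show ?thesis
    using a b by (simp add: emeasure_eq_measure a_def b_def)
qed

end

lemma ln_fact_upper:
  assumes "1 \<le> n"
  shows "ln (fact n) \<le> real n * ln (real n) - real n + ln (real n) + 1"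
  using assms
proof (induction n rule: dec_induct)
  case base
  then show ?case by simp
next
  case (step n)
  have n: "1 \<le> real n" using step.hyps by simp
  have key: "1 \<le> (real n + 1) * (ln (real n + 1) - ln (real n))"
  proof -
    have "ln (real n / (real n + 1)) \<le> real n / (real n + 1) - 1"
      using n by (intro ln_le_minus_one) auto
    also have "\<dots> = - 1 / (real n + 1)" using n by (simp add: field_simps)
    finally have "ln (real n / (real n + 1)) \<le> - 1 / (real n + 1)" .
    then have "1 / (real n + 1) \<le> ln (real n + 1) - ln (real n)"
      using n by (simp add: ln_div)
    then show ?thesis using n by (simp add: field_simps)
  qed
  have "ln (fact (Suc n)) = ln (real n + 1) + ln (fact n)"
    by (simp add: ln_mult add.commute)
  also have "\<dots> \<le> ln (real n + 1) + (real n * ln (real n) - real n + ln (real n) + 1)"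
    using step.IH by simp
  also have "\<dots> \<le> real (Suc n) * ln (real (Suc n)) - real (Suc n) + ln (real (Suc n)) + 1"
    using key by (simp add: algebra_simps)
  finally show ?case .
qed

lemma lower_alg:
  fixes l L :: real and N :: nat
  assumes l: "0 < l" and L3: "3 \<le> L" and L4: "4 * l \<le> L" and lL: "4 \<le> l * L"
    and N1: "sqrt (l * L) \<le> real N" and N2: "real N \<le> sqrt (l * L) + 1"
  shows "- 6 - 4 * ln L \<le> - 2 * sqrt (l * L) + real N * ln l + real (N - 2) * ln L - ln (fact N) - ln (fact (N - 2))"
proof -
  define q where "q = sqrt (l * L)"
  have q2: "2 \<le> q" unfolding q_def by (rule real_le_rsqrt) (use lL in simp)
  have qq: "q * q = l * L" unfolding q_def using l L3 by simp
  have N2': "2 \<le> N" using q2 N1 unfolding q_def by linarith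
  have Npos: "0 < real N" using N2' by simp
  have qL: "q \<le> L / 2"
  proof -
    have a: "4 * l * L \<le> L * L" using mult_right_mono[OF L4, of L] L3 by simp
    have b: "(L / 2) ^ 2 = L * L / 4" by (simp add: power2_eq_square)
    have "l * L \<le> (L / 2) ^ 2" using a unfolding b by linarith
    then show ?thesis unfolding q_def using L3 by (intro real_le_lsqrt) auto
  qed
  have NL: "real N \<le> L" using N2 qL L3 unfolding q_def by linarith
  have lnNL: "ln (real N) \<le> ln L" using NL Npos by simp
  have f1: "ln (fact (N - 2) :: real) \<le> ln (fact N)"
  proof -
    have "fact (N - 2) \<le> (fact N :: real)" by (rule fact_mono) auto
    then show ?thesis by simp
  qed
  have f2: "ln (fact N) \<le> real N * ln (real N) - real N + ln (real N) + 1"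
    using N2' by (intro ln_fact_upper) auto
  have lnq: "ln l + ln L = 2 * ln q"
    using l L3 unfolding q_def by (simp add: ln_sqrt ln_mult)
  have r: "ln (real N / q) \<le> real N / q - 1"
    using Npos q2 by (intro ln_le_minus_one) auto
  have r2: "real N * (real N / q - 1) \<le> 2"
  proof -
    have "real N * (real N / q - 1) = real N * (real N - q) / q" using q2 by (simp add: field_simps)
    also have "\<dots> \<le> real N * 1 / q" using q2 N2 Npos lL unfolding q_def
      by (intro divide_right_mono mult_left_mono) auto
    also have "\<dots> \<le> (q + 1) / q" using q2 N2 lL unfolding q_def by (intro divide_right_mono) auto
    also have "\<dots> \<le> 2" using q2 by (simp add: field_simps)
    finally show ?thesis .
  qed
  have lnNq: "ln (real N / q) = ln (real N) - ln q" using Npos q2 by (simp add: ln_div)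
  have "real (N - 2) = real N - 2" using N2' by simp
  then have "real N * ln l + real (N - 2) * ln L = real N * (ln l + ln L) - 2 * ln L"
    by (simp add: algebra_simps)
  also have "\<dots> = 2 * real N * ln q - 2 * ln L" by (simp add: lnq)
  finally have e: "real N * ln l + real (N - 2) * ln L = 2 * real N * ln q - 2 * ln L" .
  have "- 2 * q + 2 * real N * ln q - 2 * ln L - 2 * (real N * ln (real N) - real N + ln (real N) + 1)
      = 2 * (real N - q) - 2 * (real N * ln (real N / q)) - 2 * ln L - 2 * ln (real N) - 2"
    by (simp add: lnNq algebra_simps)
  also have "\<dots> \<ge> 0 - 2 * 2 - 2 * ln L - 2 * ln L - 2"
  proof -
    have "real N * ln (real N / q) \<le> real N * (real N / q - 1)" using r Npos by (intro mult_left_mono) auto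
    then have A2: "real N * ln (real N / q) \<le> 2" using r2 by (rule order_trans)
    have "real N - q \<ge> 0" using N1 unfolding q_def by simp
    then show ?thesis using A2 lnNL by (smt (verit))
  qed
  finally show ?thesis using e f1 f2 unfolding q_def by (smt (verit))
qed


theorem theorem3:
  fixes M :: "'a measure" and E :: "nat \<Rightarrow> 'a \<Rightarrow> real" and l :: real
  assumes "prob_space M"
    and "0 < l"
    and "prob_space.indep_vars M (\<lambda>_. borel) E UNIV"
    and "\<And>k. distributed M lborel (E k) (exponential_density l)"
  shows "(\<lambda>t. ln (measure M {\<omega> \<in> space M. prod_min_partial_sums E \<omega> \<le> t})
              + (sqrt (- ln t) - sqrt l)\<^sup>2)
         \<in> O[at_right 0](\<lambda>t. ln (- ln t))"
proof -
  interpret expseq M E l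
    by (intro expseq.intro expseq_axioms.intro) (use assms in auto)
  have l: "0 < l" by fact
  define P where "P t = measure M {\<omega> \<in> space M. prod_min_partial_sums E \<omega> \<le> t}" for t
  define L0 where "L0 = max (max (4 * l) 3) (4 / l)"
  have ev: "eventually (\<lambda>t. 0 < t \<and> t < exp (- L0)) (at_right (0::real))"
    unfolding eventually_at_right_field by (intro exI[of _ "exp (- L0)"]) auto
  have "eventually (\<lambda>t. norm (ln (P t) + (sqrt (- ln t) - sqrt l)\<^sup>2) \<le> (10 + l) * norm (ln (- ln t))) (at_right 0)"
    using ev
  proof eventually_elim
    case (elim t)
    define L where "L = - ln t"
    have t: "0 < t" "t < exp (- L0)" using elim by auto
    have tL: "t = exp (- L)" using t by (simp add: L_def)
    have LL0: "L0 < L" using t unfolding L_def by (smt (verit) exp_less_cancel_iff exp_ln)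
    have L3: "3 \<le> L" and L4: "4 * l \<le> L" and L5: "4 / l \<le> L" using LL0 by (auto simp: L0_def)
    have lL: "4 \<le> l * L" using L5 l by (simp add: field_simps)
    have lnL: "1 \<le> ln L"
    proof -
      have "exp 1 \<le> (3::real)" using exp_le by simp
      then have "exp 1 \<le> L" using L3 by simp
      then show ?thesis using L3 by (simp add: ln_ge_iff)
    qed
    define a where "a = sqrt l"
    define b where "b = sqrt L"
    have a: "0 < a" "a * a = l" using l by (auto simp: a_def)
    have b: "0 < b" "b * b = L" using L3 by (auto simp: b_def)
    have q: "sqrt (l * L) = a * b" by (simp add: a_def b_def real_sqrt_mult)
    have ab: "4 * a * a \<le> b * b" using L4 a b by simp
    then have "(2 * a)\<^sup>2 \<le> b\<^sup>2" by (simp add: power2_eq_square)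
    then have ab2: "2 * a \<le> b" using less_imp_le[OF b(1)] by (rule power2_le_imp_le)
    define s where "s = 1 - a / b"
    have s: "0 < s" "s < 1" using ab2 a b by (auto simp: s_def field_simps)
    have t2: "2 * t \<le> 1"
    proof -
      have "t \<le> exp (- 3)" using tL L3 by simp
      also have "exp (- 3) \<le> exp (- 1::real)" by simp
      also have "exp (- 1::real) \<le> 1 / 2" using exp_ge_add_one_self[of 1] by (simp add: exp_minus field_simps)
      finally show ?thesis by simp
    qed
    have Pup: "P t \<le> (2 * t) powr s * exp (l / (1 - s))"
      unfolding P_def by (rule upper) (use t s t2 in auto)
    define N where "N = nat \<lceil>a * b\<rceil>"
    have abn: "0 \<le> a * b" using a b by simp
    have Nc: "real N = real_of_int \<lceil>a * b\<rceil>" unfolding N_def using abn by simp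
    have N1: "a * b \<le> real N" unfolding Nc by (rule le_of_int_ceiling)
    have N2: "real N \<le> a * b + 1" unfolding Nc by (rule of_int_ceiling_le_add_one)
    have ab1: "2 \<le> a * b" using lL q by (metis real_le_rsqrt power2_eq_square real_sqrt_four real_sqrt_le_mono)
    have N2': "2 \<le> N" using N1 ab1 by linarith
    define m where "m = N - 2"
    have Nm: "N = Suc (Suc m)" using N2' by (simp add: m_def)
    define LB where "LB = exp (- l) * l ^ Suc (Suc m) / fact (Suc (Suc m)) * (t * (- ln t) ^ m / fact m)"
    have LBpos: "0 < LB" using l t L3 by (simp add: LB_def L_def[symmetric])
    have Plow: "LB \<le> P t"
      unfolding P_def LB_def by (rule lower) (use t t2 in auto)
    have Ppos: "0 < P t" using LBpos Plow by simp
    have lnLB: "ln LB = - l + real N * ln l - ln (fact N) - L + real m * ln L - ln (fact m)"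
    proof -
      have lnt: "ln t = - L" by (simp add: L_def)
      show ?thesis using l L3 t unfolding LB_def Nm
        by (simp add: ln_mult ln_div ln_realpow L_def[symmetric] lnt algebra_simps del: fact_Suc)
    qed
    have low: "ln LB \<le> ln (P t)" using Plow LBpos by simp
    have up: "ln (P t) \<le> s * (ln 2 - L) + l / (1 - s)"
    proof -
      have "ln (P t) \<le> ln ((2 * t) powr s * exp (l / (1 - s)))" using Pup Ppos by simp
      also have "\<dots> = s * (ln 2 - L) + l / (1 - s)"
        using t by (simp add: ln_mult ln_powr L_def)
      finally show ?thesis .
    qed
    have up2: "s * (ln 2 - L) + l / (1 - s) \<le> ln 2 - L + 2 * (a * b)"
    proof -
      have e1: "s * (ln 2 - L) = s * ln 2 - L + a * b"
        using b by (simp add: s_def field_simps flip: b(2))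
      have e2: "l / (1 - s) = a * b" using a b by (simp add: s_def field_simps flip: a(2))
      have "s * ln 2 \<le> ln 2" using s by (simp add: mult_left_le_one_le)
      then show ?thesis using e1 e2 by linarith
    qed
    have sq: "(sqrt (- ln t) - sqrt l)\<^sup>2 = L - 2 * (a * b) + l"
      using a b by (simp add: L_def[symmetric] power2_eq_square a_def[symmetric] b_def[symmetric] algebra_simps flip: a(2) b(2))
    have alg: "- 6 - 4 * ln L \<le> - 2 * sqrt (l * L) + real N * ln l + real (N - 2) * ln L - ln (fact N) - ln (fact (N - 2))"
      by (rule lower_alg) (use l L3 L4 lL N1 N2 q in auto)
    have f_low: "- 6 - 4 * ln L \<le> ln (P t) + (sqrt (- ln t) - sqrt l)\<^sup>2"
      using alg low lnLB sq q by (simp add: m_def)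
    have f_up: "ln (P t) + (sqrt (- ln t) - sqrt l)\<^sup>2 \<le> ln 2 + l"
      using up up2 sq by linarith
    have l2: "ln 2 \<le> (1::real)" using ln_2_less_1 by simp
    have ll: "l * 1 \<le> l * ln L" using lnL l by (intro mult_left_mono) auto
    have dist: "(10 + l) * ln L = 10 * ln L + l * ln L" by (simp add: algebra_simps)
    have lnL0: "0 \<le> l * ln L" using ll l by simp
    have fin: "\<bar>ln (P t) + (sqrt (- ln t) - sqrt l)\<^sup>2\<bar> \<le> (10 + l) * ln L"
      unfolding dist using f_low f_up lnL l2 ll lnL0 by linarith
    have nn: "\<bar>ln (- ln t)\<bar> = ln L" using lnL by (simp add: L_def[symmetric])
    show ?case unfolding real_norm_def nn by (rule fin)
  qed
  then show ?thesis unfolding P_def by (intro bigoI) 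
qed


end
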